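(* Let $\bm{H}_1,\dots,\bm{H}_N$ be random matrices with values in $\mathbb{C}^{N_R\times N_T}$ (sub-channels of a frequency-selective MIMO channel), let $W,\rho>0$, and let $c=\frac{W}{N}\sum_{j=1}^N\log_2\det(\bm{I}_{N_R}+\frac{\rho}{N_T}\bm{H}_j\bm{H}_j^\ast)$ be the capacity when channel side information is known only at the receiver. If for every $j\in\{1,\dots,N\}$ there is $\theta>0$ with $\mathbb{E}\big[\prod_{i=1}^{r(\bm{H}_j)}(1+\lambda_i^j)^\theta\big]<\infty$, where $r(\bm{H}_j)$ is the rank of $\bm{H}_j$ and $\lambda_i^j$ are the (positive) eigenvalues of $\bm{H}_j\bm{H}_j^\ast$, then the distribution of $c$ is light-tailed.
   Context: A nonnegative random variable $X$ is light-tailed if $\Pr(X>x)=O(e^{-\theta x})$ for some $\theta>0$, equivalently $\mathbb{E}[e^{\theta X}]<\infty$ for some $\theta>0$. *)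

theory Defs
  imports "HOL-Analysis.Analysis" "HOL-Probability.Probability"
          "HOL-Computational_Algebra.Fundamental_Theorem_Algebra"
begin

definition conj_transpose :: "complex ^'n ^'m \<Rightarrow> complex ^'m ^'n" where
  "conj_transpose A = (\<chi> i j. cnj (A $ j $ i))"

definition charpoly :: "complex ^'n ^'n \<Rightarrow> complex poly" where
  "charpoly A = det (\<chi> i j. (if i = j then [:0, 1:] else 0) - [: A $ i $ j :])"

definition eigenvalues_mset :: "complex ^'n ^'n \<Rightarrow> complex multiset" where
  "eigenvalues_mset A = proots (charpoly A)"

text \<open>The positive eigenvalues of H H^* (with multiplicity): there are exactly rank H of them.\<close>
definition pos_eigs_HHs :: "complex ^'t ^'r \<Rightarrow> real multiset" where
  "pos_eigs_HHs H = image_mset Re (filter_mset (\<lambda>z. z \<noteq> 0) (eigenvalues_mset (H ** conj_transpose H)))"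

definition capacity_csir ::
  "real \<Rightarrow> real \<Rightarrow> nat \<Rightarrow> (nat \<Rightarrow> complex ^'t ^'r) \<Rightarrow> real" where
  "capacity_csir W \<rho> N H =
     W / real N * (\<Sum>j = 1..N.
        log 2 (Re (det (mat 1 + of_real (\<rho> / real CARD('t)) *s (H j ** conj_transpose (H j))))))"

definition light_tailed :: "'a measure \<Rightarrow> ('a \<Rightarrow> real) \<Rightarrow> bool" where
  "light_tailed M X \<longleftrightarrow> (\<exists>\<theta>>0. (\<integral>\<^sup>+ x. ennreal (exp (\<theta> * X x)) \<partial>M) < \<infinity>)"

end

theory Submission
  imports Defs
begin

lemma poly_det:
  fixes M :: "'a::comm_ring_1 poly ^'n^'n"
  shows "poly (det M) z = det (\<chi> i j. poly (M$i$j) z)"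
  unfolding det_def by (simp add: poly_sum poly_prod)

lemma det_eq0_ex:
  fixes A :: "'a::field^'n^'n"
  assumes "det A = 0" shows "\<exists>v. v \<noteq> 0 \<and> A *v v = 0"
proof -
  have "\<not> inj ((*v) A)"
    using det_nz_iff_inj_gen[of "(*v) A"] assms by simp
  then obtain x y where "x \<noteq> y" "A *v x = A *v y" unfolding inj_def by blast
  then show ?thesis
    by (intro exI[of _ "x - y"]) (simp add: matrix_vector_mult_diff_distrib)
qed

lemma det_smult_mat:
  fixes A :: "'a::comm_ring_1^'n^'n"
  shows "det (\<chi> i j. c * A$i$j) = c ^ CARD('n) * det A"
proof -
  have "(\<chi> i j. c * A$i$j) = (mat c :: 'a^'n^'n) ** A"
  proof -
    have "\<And>i j. (\<Sum>k\<in>UNIV. (if i = k then c else 0) * A$k$j) = c * A$i$j"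
    proof -
      fix i j
      have "(\<Sum>k\<in>UNIV. (if i = k then c else 0) * A$k$j) = (\<Sum>k\<in>UNIV. if i = k then c * A$k$j else 0)"
        by (rule sum.cong) auto
      then show "(\<Sum>k\<in>UNIV. (if i = k then c else 0) * A$k$j) = c * A$i$j" by simp
    qed
    then show ?thesis by (simp add: vec_eq_iff matrix_matrix_mult_def mat_def)
  qed
  moreover have "det (mat c :: 'a^'n^'n) = c ^ CARD('n)"
    by (subst det_diagonal) (auto simp: mat_def)
  ultimately show ?thesis by (simp add: det_mul)
qed

lemma ofreal_smat: "((of_real r :: complex^'r) *s (M :: complex^'r^'r)) $ i $ j = of_real r * M$i$j"
  by (simp add: of_real_def)

lemma charpoly_monic:
  fixes A :: "complex^'n^'n"
  shows "degree (charpoly A) = CARD('n) \<and> coeff (charpoly A) (CARD('n)) = 1"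
proof -
  define M :: "complex poly^'n^'n" where "M = (\<chi> i j. (if i = j then [:0, 1:] else 0) - [: A $ i $ j :])"
  have cp: "charpoly A = det M" unfolding charpoly_def M_def ..
  define T where "T = (\<lambda>p. of_int (sign p) * (\<Prod>i\<in>UNIV. M$i$p i))"
  define P where "P = {p. p permutes (UNIV :: 'n set)}"
  have fin: "finite P" unfolding P_def by (simp add: finite_permutations)
  have idP: "id \<in> P" unfolding P_def by (simp add: permutes_id)
  have dM: "det M = T id + (\<Sum>p\<in>P - {id}. T p)"
    unfolding det_def T_def P_def[symmetric] using fin idP by (simp add: sum.remove)
  have Tid: "T id = (\<Prod>i\<in>UNIV. [:- (A$i$i), 1:])"
    unfolding T_def M_def by (simp add: sign_id)
  have degTid: "degree (T id) = CARD('n)"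
    unfolding Tid by (subst degree_prod_eq_sum_degree) auto
  have lcTid: "coeff (T id) (CARD('n)) = 1"
    using lead_coeff_prod[of "\<lambda>i. [:- (A$i$i), 1:]" UNIV] degTid Tid by simp
  have degT: "degree (T p) < CARD('n)" if "p \<in> P - {id}" for p
  proof -
    from that have pp: "p permutes UNIV" "p \<noteq> id" unfolding P_def by auto
    then obtain k where k: "p k \<noteq> k" by (metis eq_id_iff)
    have "degree (T p) \<le> degree (\<Prod>i\<in>UNIV. M$i$p i)"
      unfolding T_def using degree_mult_le[of "of_int (sign p)" "\<Prod>i\<in>UNIV. M$i$p i"] by simp
    also have "\<dots> \<le> (\<Sum>i\<in>UNIV. degree (M$i$p i))"
      using degree_prod_sum_le[of UNIV "\<lambda>i. M$i$p i"] by simp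
    also have "\<dots> \<le> (\<Sum>i\<in>UNIV. if p i = i then 1 else 0)"
      by (rule sum_mono) (auto simp: M_def degree_diff_le)
    also have "\<dots> < (\<Sum>i\<in>(UNIV::'n set). 1)"
      using k by (intro sum_strict_mono_ex1) auto
    finally show ?thesis by simp
  qed
  have cT: "coeff (T p) m = 0" if "p \<in> P - {id}" "m \<ge> CARD('n)" for p m
    using degT[OF that(1)] that(2) by (intro coeff_eq_0) simp
  have cdet: "coeff (det M) m = coeff (T id) m" if "m \<ge> CARD('n)" for m
    unfolding dM by (simp add: coeff_sum cT[OF _ that])
  have "degree (det M) \<le> CARD('n)"
    by (rule degree_le) (use cdet degTid coeff_eq_0 in \<open>metis less_imp_le\<close>)
  moreover have "coeff (det M) (CARD('n)) = 1" using cdet lcTid by simp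
  ultimately show ?thesis unfolding cp
    by (metis le_antisym le_degree zero_neq_one)
qed

lemma prod_mset_cmult: "(\<Prod>x\<in>#M. c * f x) = c ^ size M * (\<Prod>x\<in>#M. f x)"
  for c :: "'b::comm_monoid_mult"
  by (induction M) (simp_all add: algebra_simps)

lemma charpoly_eval:
  fixes A :: "complex^'n^'n"
  shows "det (\<chi> i j. (if i = j then z else 0) - A$i$j) = (\<Prod>\<mu>\<in>#proots (charpoly A). z - \<mu>)"
proof -
  have "charpoly A = smult (lead_coeff (charpoly A)) (\<Prod>x\<in>#proots (charpoly A). [:-x, 1:])"
    by (rule complex_poly_decompose_multiset[symmetric])
  then have eq: "charpoly A = (\<Prod>x\<in>#proots (charpoly A). [:-x, 1:])"
    using charpoly_monic[of A] by simp
  have "poly (charpoly A) z = det (\<chi> i j. (if i = j then z else 0) - A$i$j)"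
    unfolding charpoly_def poly_det by (intro arg_cong[where f=det]) (simp add: vec_eq_iff)
  moreover have "poly (charpoly A) z = (\<Prod>\<mu>\<in>#proots (charpoly A). z - \<mu>)"
    by (subst eq) (simp add: poly_prod_mset multiset.map_comp o_def)
  ultimately show ?thesis by simp
qed

lemma det_I_plus:
  fixes A :: "complex^'n^'n"
  assumes a: "a \<noteq> 0"
  shows "det (\<chi> i j. (if i = j then 1 else 0) + a * A$i$j) = (\<Prod>\<mu>\<in>#proots (charpoly A). 1 + a * \<mu>)"
proof -
  let ?z = "- 1 / a"
  have sz: "size (proots (charpoly A)) = CARD('n)"
    using charpoly_monic[of A] size_proots_complex by simp
  have "(\<chi> i j. (if i = j then ?z else 0) - A$i$j) = (\<chi> i j. ?z * ((if i = j then 1 else 0) + a * A$i$j))"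
    using a by (simp add: vec_eq_iff field_simps)
  then have "(- 1 / a) ^ CARD('n) * det (\<chi> i j. (if i = j then 1 else 0) + a * A$i$j)
      = (\<Prod>\<mu>\<in>#proots (charpoly A). ?z - \<mu>)"
    using charpoly_eval[of ?z A] det_smult_mat[of ?z "\<chi> i j. (if i = j then 1 else 0) + a * A$i$j"]
    by simp
  also have "\<dots> = (\<Prod>\<mu>\<in>#proots (charpoly A). ?z * (1 + a * \<mu>))"
    using a by (intro arg_cong[where f=prod_mset] image_mset_cong) (simp add: field_simps)
  also have "\<dots> = (- 1 / a) ^ CARD('n) * (\<Prod>\<mu>\<in>#proots (charpoly A). 1 + a * \<mu>)"
    using prod_mset_cmult[of ?z "\<lambda>\<mu>. 1 + a * \<mu>" "proots (charpoly A)"] sz by simp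
  finally show ?thesis using a by simp
qed

lemma quad_form:
  fixes H :: "complex^'t^'r" and v :: "complex^'r"
  shows "(\<Sum>i\<in>UNIV. cnj (v$i) * (\<Sum>j\<in>UNIV. (H ** conj_transpose H)$i$j * v$j))
       = (\<Sum>k\<in>UNIV. (\<Sum>j\<in>UNIV. v$j * cnj (H$j$k)) * cnj (\<Sum>j\<in>UNIV. v$j * cnj (H$j$k)))"
proof -
  have A: "(H ** conj_transpose H)$i$j = (\<Sum>k\<in>UNIV. H$i$k * cnj (H$j$k))" for i j
    by (simp add: matrix_matrix_mult_def conj_transpose_def)
  define F where "F = (\<lambda>i j k. cnj (v$i) * H$i$k * (cnj (H$j$k) * v$j))"
  have "(\<Sum>i\<in>UNIV. cnj (v$i) * (\<Sum>j\<in>UNIV. (H ** conj_transpose H)$i$j * v$j))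
     = (\<Sum>i\<in>UNIV. \<Sum>j\<in>UNIV. \<Sum>k\<in>UNIV. F i j k)"
    unfolding A F_def by (simp add: sum_distrib_left sum_distrib_right mult_ac)
  also have "\<dots> = (\<Sum>i\<in>UNIV. \<Sum>k\<in>UNIV. \<Sum>j\<in>UNIV. F i j k)"
    by (rule sum.cong[OF refl]) (rule sum.swap)
  also have "\<dots> = (\<Sum>k\<in>UNIV. \<Sum>i\<in>UNIV. \<Sum>j\<in>UNIV. F i j k)"
    by (rule sum.swap)
  also have "\<dots> = (\<Sum>k\<in>UNIV. (\<Sum>i\<in>UNIV. cnj (v$i) * H$i$k) * (\<Sum>j\<in>UNIV. cnj (H$j$k) * v$j))"
    unfolding F_def by (simp add: sum_product)
  also have "\<dots> = (\<Sum>k\<in>UNIV. (\<Sum>j\<in>UNIV. v$j * cnj (H$j$k)) * cnj (\<Sum>j\<in>UNIV. v$j * cnj (H$j$k)))"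
    by (simp add: cnj_sum mult_ac)
  finally show ?thesis .
qed

lemma eig_nonneg:
  fixes H :: "complex^'t^'r"
  assumes "\<mu> \<in># proots (charpoly (H ** conj_transpose H))"
  shows "Im \<mu> = 0 \<and> Re \<mu> \<ge> 0"
proof -
  let ?A = "H ** conj_transpose H"
  have "(\<Prod>x\<in>#proots (charpoly ?A). \<mu> - x) = 0"
    using assms by (simp add: prod_mset_zero_iff)
  then have "det (\<chi> i j. (if i = j then \<mu> else 0) - ?A$i$j) = 0"
    by (simp add: charpoly_eval)
  then obtain v where v: "v \<noteq> 0" "(\<chi> i j. (if i = j then \<mu> else 0) - ?A$i$j) *v v = 0"
    using det_eq0_ex by blast
  have ev: "\<mu> * v$i = (\<Sum>j\<in>UNIV. ?A$i$j * v$j)" for i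
  proof -
    have "((\<chi> i j. (if i = j then \<mu> else 0) - ?A$i$j) *v v) $ i = 0" using v(2) by simp
    then have "(\<Sum>j\<in>UNIV. ((if i = j then \<mu> else 0) - ?A$i$j) * v$j) = 0"
      by (simp add: matrix_vector_mult_def)
    then have "(\<Sum>j\<in>UNIV. (if i = j then \<mu> * v$j else 0)) - (\<Sum>j\<in>UNIV. ?A$i$j * v$j) = 0"
      by (simp add: left_diff_distrib sum_subtractf if_distrib[of "\<lambda>x. x * _"] cong: if_cong)
    then show ?thesis by simp
  qed
  define S where "S = (\<Sum>i\<in>UNIV. (cmod (v$i))^2)"
  define R where "R = (\<Sum>k\<in>UNIV. (cmod (\<Sum>j\<in>UNIV. v$j * cnj (H$j$k)))^2)"
  have nsq: "\<And>z. z * cnj z = of_real ((cmod z)^2)" by (metis complex_norm_square)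
  have "\<mu> * of_real S = (\<Sum>i\<in>UNIV. \<mu> * of_real ((cmod (v$i))^2))"
    by (simp only: S_def of_real_sum sum_distrib_left)
  also have "\<dots> = (\<Sum>i\<in>UNIV. cnj (v$i) * (\<mu> * v$i))"
    by (rule sum.cong[OF refl]) (metis nsq mult.commute mult.left_commute)
  also have "\<dots> = of_real R"
    unfolding ev quad_form R_def of_real_sum by (rule sum.cong[OF refl]) (metis nsq)
  finally have eq: "\<mu> * of_real S = of_real R" .
  have "S > 0"
  proof -
    obtain i where "v$i \<noteq> 0" using v(1) by (metis vec_eq_iff zero_index)
    then have "(cmod (v$i))^2 > 0" by simp
    moreover have "(cmod (v$i))^2 \<le> S" unfolding S_def
      by (rule member_le_sum) auto
    ultimately show ?thesis by linarith
  qed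
  moreover have "R \<ge> 0" unfolding R_def by (simp add: sum_nonneg)
  ultimately have "\<mu> = of_real (R / S)" using eq
    by (simp add: field_simps)
  then show ?thesis using \<open>R \<ge> 0\<close> \<open>S > 0\<close> by simp
qed

lemma of_real_prod_mset': "of_real (\<Prod>x\<in>#M. f x) = (\<Prod>x\<in>#M. (of_real (f x) :: complex))"
  by (induction M) simp_all

lemma prod_mset_nonneg':
  fixes f :: "'b \<Rightarrow> real"
  assumes "\<And>x. x \<in># M \<Longrightarrow> 0 \<le> f x"
  shows "0 \<le> (\<Prod>x\<in>#M. f x)"
  using assms by (induction M) auto

lemma prod_mset_filter_one:
  assumes "\<And>x. \<not> P x \<Longrightarrow> f x = 1"
  shows "(\<Prod>x\<in>#M. f x) = (\<Prod>x\<in>#filter_mset P M. f x)"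
  by (induction M) (auto simp: assms)

lemma prod_mset_bound:
  fixes M :: "real multiset"
  assumes "\<And>x. x \<in># M \<Longrightarrow> 0 \<le> x" and r: "r > 0"
  shows "1 \<le> (\<Prod>l\<in>#M. 1 + r * l) \<and> (\<Prod>l\<in>#M. 1 + r * l) \<le> (max 1 r) ^ size M * (\<Prod>l\<in>#M. 1 + l)"
  using assms(1)
proof (induction M)
  case empty
  then show ?case by simp
next
  case (add x M)
  then have x: "0 \<le> x" and IH: "1 \<le> (\<Prod>l\<in>#M. 1 + r * l)"
      "(\<Prod>l\<in>#M. 1 + r * l) \<le> (max 1 r) ^ size M * (\<Prod>l\<in>#M. 1 + l)" by auto
  have f1: "1 \<le> 1 + r * x" using x r by simp
  have f2: "1 + r * x \<le> max 1 r * (1 + x)"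
  proof -
    have "r * x \<le> max 1 r * x" using x by (intro mult_right_mono) auto
    moreover have "1 \<le> max 1 r" by simp
    ultimately show ?thesis by (simp add: algebra_simps)
  qed
  have "1 \<le> (1 + r * x) * (\<Prod>l\<in>#M. 1 + r * l)"
    using mult_mono[OF f1 IH(1)] f1 by simp
  moreover have "(1 + r * x) * (\<Prod>l\<in>#M. 1 + r * l) \<le> (max 1 r * (1 + x)) * ((max 1 r) ^ size M * (\<Prod>l\<in>#M. 1 + l))"
    using f1 f2 IH by (intro mult_mono) auto
  ultimately show ?case by (simp add: mult_ac)
qed

lemma det_bound:
  fixes H :: "complex^'t^'r"
  assumes r: "r > 0"
  defines "D \<equiv> Re (det (mat 1 + of_real r *s (H ** conj_transpose H)))"
  shows "1 \<le> D \<and> D \<le> (max 1 r) ^ CARD('r) * (\<Prod>l\<in>#pos_eigs_HHs H. 1 + l)"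
proof -
  let ?A = "H ** conj_transpose H"
  let ?P = "proots (charpoly ?A)"
  let ?Q = "pos_eigs_HHs H"
  have m: "mat 1 + of_real r *s ?A = (\<chi> i j. (if i = j then 1 else 0) + of_real r * ?A$i$j)"
    by (simp add: vec_eq_iff mat_def of_real_def)
  have "det (mat 1 + of_real r *s ?A) = (\<Prod>\<mu>\<in>#?P. 1 + of_real r * \<mu>)"
    unfolding m using r by (intro det_I_plus) simp
  also have "\<dots> = (\<Prod>\<mu>\<in>#?P. of_real (1 + r * Re \<mu>))"
  proof (intro arg_cong[where f=prod_mset] image_mset_cong)
    fix \<mu> assume "\<mu> \<in># ?P"
    then have "Im \<mu> = 0" using eig_nonneg by blast
    then have "\<mu> = of_real (Re \<mu>)" by (simp add: complex_eq_iff)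
    then show "1 + of_real r * \<mu> = of_real (1 + r * Re \<mu>)"
      by (metis of_real_1 of_real_add of_real_mult)
  qed
  also have "\<dots> = of_real (\<Prod>\<mu>\<in>#?P. 1 + r * Re \<mu>)"
    by (simp only: of_real_prod_mset')
  finally have "D = (\<Prod>\<mu>\<in>#?P. 1 + r * Re \<mu>)" unfolding D_def by simp
  also have "\<dots> = (\<Prod>\<mu>\<in>#filter_mset (\<lambda>z. z \<noteq> 0) ?P. 1 + r * Re \<mu>)"
    by (rule prod_mset_filter_one) simp
  also have "\<dots> = (\<Prod>l\<in>#?Q. 1 + r * l)"
    unfolding pos_eigs_HHs_def eigenvalues_mset_def by (simp add: multiset.map_comp o_def)
  finally have D: "D = (\<Prod>l\<in>#?Q. 1 + r * l)" .
  have nn: "0 \<le> l" if "l \<in># ?Q" for l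
    using that eig_nonneg unfolding pos_eigs_HHs_def eigenvalues_mset_def by auto
  have szQ: "size ?Q \<le> CARD('r)"
  proof -
    have "size ?Q \<le> size ?P" unfolding pos_eigs_HHs_def eigenvalues_mset_def
      by (simp add: size_filter_mset_lesseq)
    also have "\<dots> = CARD('r)" using charpoly_monic[of ?A] size_proots_complex by simp
    finally show ?thesis .
  qed
  have Q1: "0 \<le> (\<Prod>l\<in>#?Q. 1 + l)"
    proof (rule prod_mset_nonneg')
    fix l assume "l \<in># ?Q"
    then show "0 \<le> 1 + l" using nn by fastforce
  qed
  have "(max 1 r) ^ size ?Q \<le> (max 1 r) ^ CARD('r)"
    using szQ by (intro power_increasing) auto
  then have "(max 1 r) ^ size ?Q * (\<Prod>l\<in>#?Q. 1 + l) \<le> (max 1 r) ^ CARD('r) * (\<Prod>l\<in>#?Q. 1 + l)"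
    using Q1 by (intro mult_right_mono) auto
  then show ?thesis using prod_mset_bound[of ?Q r] nn r unfolding D by auto
qed

lemma meas_D:
  fixes f :: "'a \<Rightarrow> complex^'t^'r"
  assumes "f \<in> borel_measurable M"
  shows "(\<lambda>x. Re (det (mat 1 + of_real r *s (f x ** conj_transpose (f x))))) \<in> borel_measurable M"
proof -
  define F where "F = (\<lambda>B::complex^'t^'r. Re (det (mat 1 + of_real r *s (B ** conj_transpose B))))"
  have F: "F = (\<lambda>B. Re (\<Sum>p\<in>{p. p permutes (UNIV::'r set)}. of_int (sign p) *
      (\<Prod>i\<in>UNIV. (if i = p i then 1 else 0) + of_real r * (\<Sum>k\<in>UNIV. B$i$k * cnj (B$(p i)$k)))))"
    unfolding F_def det_def
    by (simp add: mat_def of_real_def matrix_matrix_mult_def conj_transpose_def)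
  have "continuous_on UNIV F"
    unfolding F by (intro continuous_intros)
  then have "F \<in> borel_measurable borel" by (rule borel_measurable_continuous_onI)
  from measurable_compose[OF assms this] show ?thesis unfolding F_def o_def by simp
qed

lemma prod_mset_powr:
  fixes M :: "real multiset" and f :: "real \<Rightarrow> real"
  assumes "\<And>l. l \<in># M \<Longrightarrow> 0 \<le> f l"
  shows "(\<Prod>l\<in>#M. f l) powr t = (\<Prod>l\<in>#M. f l powr t)"
  using assms
proof (induction M)
  case empty then show ?case by simp
next
  case (add x M)
  have "0 \<le> (\<Prod>l\<in>#M. f l)"
    using prod_mset_nonneg'[of M f] add.prems by auto
  then show ?case using add by (simp add: powr_mult)
qed

lemma prod_le_sum_powr:
  fixes y :: "nat \<Rightarrow> real"
  assumes J: "finite J" "J \<noteq> {}" and y: "\<And>j. j \<in> J \<Longrightarrow> 1 \<le> y j" and t: "0 \<le> t"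
  shows "(\<Prod>j\<in>J. y j powr (t / card J)) \<le> (\<Sum>j\<in>J. y j powr t)"
proof -
  define m where "m = Max (y ` J)"
  have mJ: "m \<in> y ` J" unfolding m_def using J by (intro Max_in) auto
  then obtain j0 where j0: "j0 \<in> J" "m = y j0" by auto
  have ym: "y j \<le> m" if "j \<in> J" for j unfolding m_def using J that by (intro Max_ge) auto
  have m1: "1 \<le> m" using y j0 by auto
  have cJ: "card J > 0" using J by (simp add: card_gt_0_iff)
  have "(\<Prod>j\<in>J. y j powr (t / card J)) \<le> (\<Prod>j\<in>J. m powr (t / card J))"
    proof (rule prod_mono)
    fix j assume "j \<in> J"
    then have "0 \<le> y j" "y j \<le> m" using y ym by (auto intro: order_trans[OF zero_le_one])
    then show "0 \<le> y j powr (t / card J) \<and> y j powr (t / card J) \<le> m powr (t / card J)"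
      using t by (auto intro: powr_mono2)
  qed
  also have "\<dots> = (m powr (t / card J)) ^ card J" by simp
  also have "\<dots> = m powr t" using m1 cJ by (subst powr_power) auto
  also have "\<dots> = y j0 powr t" using j0 by simp
  also have "\<dots> \<le> (\<Sum>j\<in>J. y j powr t)"
    using J j0 by (intro member_le_sum) auto
  finally show ?thesis .
qed

theorem theorem4:
  fixes M :: "'a measure"
    and H :: "nat \<Rightarrow> 'a \<Rightarrow> complex ^'t ^'r"
    and W \<rho> :: real and N :: nat
  assumes "prob_space M"
    and "N \<ge> 1"
    and "W > 0" and "\<rho> > 0"
    and "\<And>j. j \<in> {1..N} \<Longrightarrow> H j \<in> borel_measurable M"
    and "\<And>j. j \<in> {1..N} \<Longrightarrow> \<exists>\<theta>>0.
           (\<integral>\<^sup>+ x. ennreal (\<Prod>l\<in>#pos_eigs_HHs (H j x). (1 + l) powr \<theta>) \<partial>M) < \<infinity>"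
  shows "light_tailed M (\<lambda>x. capacity_csir W \<rho> N (\<lambda>j. H j x))"
proof -
  note meas = assms(5)
  obtain \<theta> where th: "\<And>j. j \<in> {1..N} \<Longrightarrow> \<theta> j > 0 \<and>
      (\<integral>\<^sup>+ x. ennreal (\<Prod>l\<in>#pos_eigs_HHs (H j x). (1 + l) powr \<theta> j) \<partial>M) < \<infinity>"
    using assms(6) by metis
  define J where "J = {1..N}"
  have J: "finite J" "J \<noteq> {}" "card J = N" unfolding J_def using assms(2) by auto
  define t0 where "t0 = Min (\<theta> ` J)"
  have t0pos: "t0 > 0" unfolding t0_def using J th J_def by (subst Min_gr_iff) auto
  have t0le: "t0 \<le> \<theta> j" if "j \<in> J" for j unfolding t0_def using J that by (intro Min_le) auto
  define r where "r = \<rho> / real CARD('t)"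
  have r: "r > 0" unfolding r_def using assms(4) by simp
  define K where "K = (max 1 r) ^ CARD('r)"
  have K1: "1 \<le> K" unfolding K_def by simp
  define D where "D = (\<lambda>j x. Re (det (mat 1 + of_real r *s (H j x ** conj_transpose (H j x)))))"
  define Q where "Q = (\<lambda>j x. \<Prod>l\<in>#pos_eigs_HHs (H j x). 1 + l)"
  have DQ: "1 \<le> D j x \<and> D j x \<le> K * Q j x" for j x
    unfolding D_def Q_def K_def using det_bound[OF r] by blast
  have Qnn: "0 \<le> l" if "l \<in># pos_eigs_HHs B" for l B
    using that eig_nonneg unfolding pos_eigs_HHs_def eigenvalues_mset_def by auto
  have Q1: "1 \<le> Q j x" for j x
  proof -
    have "1 \<le> (\<Prod>l\<in>#pos_eigs_HHs (H j x). 1 + 1 * l)"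
      using prod_mset_bound[of "pos_eigs_HHs (H j x)" 1] Qnn by auto
    then show ?thesis unfolding Q_def by simp
  qed
  define Kt where "Kt = K powr t0"
  have Kt: "Kt > 0" unfolding Kt_def using K1 by simp
  have bnd: "D j x powr t0 / Kt \<le> (\<Prod>l\<in>#pos_eigs_HHs (H j x). (1 + l) powr \<theta> j)"
    if "j \<in> J" for j x
  proof -
    have "D j x powr t0 \<le> (K * Q j x) powr t0"
      using DQ[of j x] t0pos by (intro powr_mono2) auto
    also have "\<dots> = Kt * Q j x powr t0" unfolding Kt_def using K1 Q1[of j x] by (simp add: powr_mult)
    also have "\<dots> \<le> Kt * Q j x powr \<theta> j"
      using Kt Q1[of j x] t0le[OF that] by (intro mult_left_mono powr_mono) auto
    also have "Q j x powr \<theta> j = (\<Prod>l\<in>#pos_eigs_HHs (H j x). (1 + l) powr \<theta> j)"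
      unfolding Q_def by (rule prod_mset_powr) (use Qnn in \<open>metis add_nonneg_nonneg zero_le_one\<close>)
    finally show ?thesis using Kt by (simp add: field_simps)
  qed
  have Dmeas: "(\<lambda>x. D j x) \<in> borel_measurable M" if "j \<in> J" for j
    unfolding D_def using meas that J_def by (intro meas_D) auto
  have fin: "(\<integral>\<^sup>+ x. ennreal (D j x powr t0) \<partial>M) < \<infinity>" if "j \<in> J" for j
  proof -
    have "(\<integral>\<^sup>+ x. ennreal (D j x powr t0) \<partial>M) = (\<integral>\<^sup>+ x. ennreal Kt * ennreal (D j x powr t0 / Kt) \<partial>M)"
      using Kt by (intro nn_integral_cong) (simp add: ennreal_mult[symmetric])
    also have "\<dots> = ennreal Kt * (\<integral>\<^sup>+ x. ennreal (D j x powr t0 / Kt) \<partial>M)"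
      using Dmeas[OF that] by (intro nn_integral_cmult) (measurable, auto)
    also have "(\<integral>\<^sup>+ x. ennreal (D j x powr t0 / Kt) \<partial>M) \<le>
        (\<integral>\<^sup>+ x. ennreal (\<Prod>l\<in>#pos_eigs_HHs (H j x). (1 + l) powr \<theta> j) \<partial>M)"
      using bnd[OF that] by (intro nn_integral_mono ennreal_leI) auto
    finally have "(\<integral>\<^sup>+ x. ennreal (D j x powr t0) \<partial>M) \<le> ennreal Kt * (\<integral>\<^sup>+ x. ennreal (\<Prod>l\<in>#pos_eigs_HHs (H j x). (1 + l) powr \<theta> j) \<partial>M)"
      by (simp add: mult_left_mono)
    also have "\<dots> < \<infinity>" using th that J_def by (simp add: ennreal_mult_less_top)
    finally show ?thesis .
  qed
  define \<theta>' where "\<theta>' = t0 * ln 2 / W"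
  have th': "\<theta>' > 0" unfolding \<theta>'_def using t0pos assms(3) by simp
  have cap: "capacity_csir W \<rho> N (\<lambda>j. H j x) = W / real N * (\<Sum>j\<in>J. log 2 (D j x))" for x
    unfolding capacity_csir_def D_def J_def r_def ..
  have pt: "exp (\<theta>' * capacity_csir W \<rho> N (\<lambda>j. H j x)) \<le> (\<Sum>j\<in>J. D j x powr t0)" for x
  proof -
    have "\<theta>' * capacity_csir W \<rho> N (\<lambda>j. H j x) = (\<Sum>j\<in>J. (t0 / card J) * ln (D j x))"
      unfolding cap \<theta>'_def J(3) using assms(3)
      by (simp add: sum_distrib_left log_def field_simps)
    note eqs = this
    have "exp (\<theta>' * capacity_csir W \<rho> N (\<lambda>j. H j x)) = (\<Prod>j\<in>J. D j x powr (t0 / card J))"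
    proof -
      have "\<And>j. D j x powr (t0 / card J) = exp (t0 * ln (D j x) / real (card J))"
        using DQ by (simp add: powr_def) (metis not_one_le_zero)
      then show ?thesis using J(1) eqs by (simp add: exp_sum mult.commute)
    qed
    also have "\<dots> \<le> (\<Sum>j\<in>J. D j x powr t0)"
      using J DQ t0pos by (intro prod_le_sum_powr) auto
    finally show ?thesis .
  qed
  have "(\<integral>\<^sup>+ x. ennreal (exp (\<theta>' * capacity_csir W \<rho> N (\<lambda>j. H j x))) \<partial>M)
      \<le> (\<integral>\<^sup>+ x. (\<Sum>j\<in>J. ennreal (D j x powr t0)) \<partial>M)"
    using pt by (intro nn_integral_mono) (simp add: ennreal_leI)
  also have "\<dots> = (\<Sum>j\<in>J. \<integral>\<^sup>+ x. ennreal (D j x powr t0) \<partial>M)"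
    using Dmeas by (intro nn_integral_sum) measurable
  also have "\<dots> < \<infinity>" using fin J(1) by simp
  finally show ?thesis unfolding light_tailed_def using th' by blast
qed
end
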